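(* Run Alg-ABRD, either with its deterministic player selection or with the randomized-selection variant, using the Shapley cost sharing mechanism, and suppose the dynamic does not converge at any step. Let $p^{t_{\max}}$ be the last generated profile and $p^{t^*}$ a generated profile of minimum total cost. Then $C(p^{t_{\max}})\le\lceil\max_j\alpha_j\rceil\cdot\mathcal{H}_N\cdot C(p^{t^*})$, where $\mathcal{H}_N=\sum_{k=1}^N1/k$.
   Context: GND instance: finite resource set $E$; requests (players) $i \in [N]$, each with a reply collection $P_i \subseteq 2^E$ and a weight vector $w_i \in \mathbb{Z}_{\geq 1}^E$; constants $q \in \mathbb{Z}_{\ge 1}$, $\alpha_1,\dots,\alpha_q > 1$; for each $e$, $\sigma_e \geq 0$ and $\xi_{e,j} \geq 0$ (at least one positive), and $F_e(0)=0$, $F_e(l)=\sigma_e+\sum_j \xi_{e,j} l^{\alpha_j}$ for $l>0$. Profile $p\in P=P_1\times\dots\times P_N$; load $l_e^p=\sum_{i: e\in p_i} w_i(e)$; total cost $C(p)=\sum_e F_e(l_e^p)$; $(p'_i,p_{-i})$ is $p$ with coordinate $i$ replaced by $p'_i$. A reply $\varrho$-oracle ($\varrho \ge 1$), given a reply collection $R$ and tolls $\tau:E\to\mathbb{R}_{>0}$, returns $r \in R$ with $\sum_{e\in r}\tau(e) \le \varrho \sum_{e \in r'}\tau(e)$ for all $r'\in R$. Shapley cost sharing: with $S_e=\{i:e\in p_i\}$, for $e\in p_i$, $f_{i,e}(p)=\mathbb{E}\big[F_e\big(\sum_{i'\in S_e^i(\pi_e)}w_{i'}(e)+w_i(e)\big)-F_e\big(\sum_{i'\in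 S_e^i(\pi_e)}w_{i'}(e)\big)\big]$, $\pi_e$ a uniformly random permutation of $S_e$ and $S_e^i(\pi_e)$ the players preceding $i$; $f_{i,e}(p)=0$ if $e\notin p_i$. Individual cost $C_i(p)=\sum_e f_{i,e}(p)$. Alg-ABRD: fix small $\epsilon>0$ and $\epsilon_1=\frac{1+\epsilon}{1-\epsilon}$. Values $\widetilde f_{i,e}(p)$ are fixed with $(1-\epsilon) f_{i,e}(p) \le \widetilde f_{i,e}(p) \le (1+\epsilon) f_{i,e}(p)$, and $\widetilde C_i(p)=\sum_e \widetilde f_{i,e}(p)$. Initial $p^0$: $p^0_i$ is the oracle's output on $P_i$ with tolls $\tau_i^0(e)=F_e(w_i(e))$. At step $t\ge1$: for every $i$ compute $p'_i$ with $\widetilde C_i(p'_i,p^{t-1}_{-i}) \le \varrho\, \widetilde C_i(p''_i,p^{t-1}_{-i})$ for all $p''_i\in P_i$, and $\delta_i^t=\widetilde C_i(p^{t-1}) - \epsilon_1 \widetilde C_i(p'_i,p^{t-1}_{-i})$. If $\delta_i^t\le 0$ for all $i$ the dynamic converges (sets $p^t=p^{t-1}$ and stops). Otherwise, deterministic selection: pick $j$ with $\delta_j^t>0$ and $\delta_j^t\ge\frac1N\sum_i\delta_i^t$ and set $p^t=(p'_j,p^{t-1}_{-j})$; randomized selection: draw $i\in[N]$ uniformly at random and set $p^t=(p'_i,p^{t-1}_{-i})$ if $\delta_i^t>0$, else $p^t=p^{t-1}$. The run lasts a fixed finite number of steps. *)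

theory Defs
  imports Complex_Main "HOL-Combinatorics.Multiset_Permutations"
begin

text \<open>Players are 0,...,N-1; resources have type 'e (the resource set is E :: 'e set);
  a profile is a function p :: nat => 'e set (coordinate i = reply of player i).\<close>

type_synonym 'e profile = "nat \<Rightarrow> 'e set"

definition Fcost :: "nat \<Rightarrow> (nat \<Rightarrow> real) \<Rightarrow> ('e \<Rightarrow> real) \<Rightarrow> ('e \<Rightarrow> nat \<Rightarrow> real)
                      \<Rightarrow> 'e \<Rightarrow> real \<Rightarrow> real" where
  "Fcost q \<alpha> \<sigma> \<xi> e l = (if l = 0 then 0 else \<sigma> e + (\<Sum>j\<in>{1..q}. \<xi> e j * l powr \<alpha> j))"

definition load :: "nat \<Rightarrow> (nat \<Rightarrow> 'e \<Rightarrow> nat) \<Rightarrow> 'e profile \<Rightarrow> 'e \<Rightarrow> nat" where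
  "load N w p e = (\<Sum>i\<in>{i. i < N \<and> e \<in> p i}. w i e)"

definition total_cost :: "'e set \<Rightarrow> ('e \<Rightarrow> real \<Rightarrow> real) \<Rightarrow> nat \<Rightarrow> (nat \<Rightarrow> 'e \<Rightarrow> nat)
                          \<Rightarrow> 'e profile \<Rightarrow> real" where
  "total_cost E F N w p = (\<Sum>e\<in>E. F e (real (load N w p e)))"

definition users :: "nat \<Rightarrow> 'e profile \<Rightarrow> 'e \<Rightarrow> nat set" where
  "users N p e = {i. i < N \<and> e \<in> p i}"

definition preceding :: "nat list \<Rightarrow> nat \<Rightarrow> nat set" where
  "preceding xs i = set (takeWhile (\<lambda>x. x \<noteq> i) xs)"

text \<open>Shapley cost share f_{i,e}(p): expectation over a uniformly random permutation of S_e
  (= average over all permutations of S_e) of the marginal cost of player i.\<close>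
definition shapley_share :: "('e \<Rightarrow> real \<Rightarrow> real) \<Rightarrow> nat \<Rightarrow> (nat \<Rightarrow> 'e \<Rightarrow> nat)
                             \<Rightarrow> 'e profile \<Rightarrow> nat \<Rightarrow> 'e \<Rightarrow> real" where
  "shapley_share F N w p i e =
     (if e \<in> p i then
        (\<Sum>xs\<in>permutations_of_set (users N p e).
            F e (real (\<Sum>i'\<in>preceding xs i. w i' e) + real (w i e))
          - F e (real (\<Sum>i'\<in>preceding xs i. w i' e)))
        / real (card (permutations_of_set (users N p e)))
      else 0)"

definition GND_instance :: "'e set \<Rightarrow> nat \<Rightarrow> (nat \<Rightarrow> 'e set set) \<Rightarrow> (nat \<Rightarrow> 'e \<Rightarrow> nat)
     \<Rightarrow> nat \<Rightarrow> (nat \<Rightarrow> real) \<Rightarrow> ('e \<Rightarrow> real) \<Rightarrow> ('e \<Rightarrow> nat \<Rightarrow> real) \<Rightarrow> bool" where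
  "GND_instance E N P w q \<alpha> \<sigma> \<xi> \<longleftrightarrow>
     finite E \<and> N \<ge> 1 \<and> q \<ge> 1 \<and>
     (\<forall>i<N. P i \<subseteq> Pow E \<and> P i \<noteq> {}) \<and>
     (\<forall>i<N. \<forall>e\<in>E. w i e \<ge> 1) \<and>
     (\<forall>j\<in>{1..q}. \<alpha> j > 1) \<and>
     (\<forall>e\<in>E. \<sigma> e \<ge> 0 \<and> (\<forall>j\<in>{1..q}. \<xi> e j \<ge> 0) \<and> (\<sigma> e > 0 \<or> (\<exists>j\<in>{1..q}. \<xi> e j > 0)))"

definition is_profile :: "nat \<Rightarrow> (nat \<Rightarrow> 'e set set) \<Rightarrow> 'e profile \<Rightarrow> bool" where
  "is_profile N P p \<longleftrightarrow> (\<forall>i<N. p i \<in> P i)"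

text \<open>A run of Alg-ABRD of T steps with profiles ps 0, ..., ps T, computed replies br t i
  (at step t for player i), approximate costs Ct (Ct i p = sum_e ft_{i,e}(p)),
  oracle factor rho, eps1 = (1+eps)/(1-eps), selection rule deterministic (det = True)
  or randomized (det = False; any realization of the random draws), and such that
  the dynamic does not converge at any step 1..T.\<close>
definition ABRD_run_nonconv ::
  "'e set \<Rightarrow> nat \<Rightarrow> (nat \<Rightarrow> 'e set set) \<Rightarrow> ('e \<Rightarrow> real \<Rightarrow> real) \<Rightarrow> (nat \<Rightarrow> 'e \<Rightarrow> nat)
   \<Rightarrow> real \<Rightarrow> real \<Rightarrow> (nat \<Rightarrow> 'e profile \<Rightarrow> real) \<Rightarrow> bool
   \<Rightarrow> nat \<Rightarrow> (nat \<Rightarrow> 'e profile) \<Rightarrow> (nat \<Rightarrow> nat \<Rightarrow> 'e set) \<Rightarrow> bool" where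
  "ABRD_run_nonconv E N P F w \<rho> \<epsilon>1 Ct det T ps br \<longleftrightarrow>
     \<comment> \<open>initial profile: oracle output on P_i with tolls F_e(w_i(e))\<close>
     (\<forall>i<N. ps 0 i \<in> P i \<and>
        (\<forall>r'\<in>P i. (\<Sum>e\<in>ps 0 i. F e (real (w i e))) \<le> \<rho> * (\<Sum>e\<in>r'. F e (real (w i e))))) \<and>
     (\<forall>t\<in>{1..T}.
        \<comment> \<open>approximate best replies computed at step t\<close>
        (\<forall>i<N. br t i \<in> P i \<and>
           (\<forall>r\<in>P i. Ct i ((ps (t-1))(i := br t i)) \<le> \<rho> * Ct i ((ps (t-1))(i := r)))) \<and>
        (let \<delta> = (\<lambda>i. Ct i (ps (t-1)) - \<epsilon>1 * Ct i ((ps (t-1))(i := br t i))) in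
          \<comment> \<open>no convergence at step t\<close>
          (\<exists>i<N. \<delta> i > 0) \<and>
          (if det then
             (\<exists>j<N. \<delta> j > 0 \<and> \<delta> j \<ge> (1 / real N) * (\<Sum>i<N. \<delta> i) \<and>
                    ps t = (ps (t-1))(j := br t j))
           else
             (\<exists>i<N. ps t = (if \<delta> i > 0 then (ps (t-1))(i := br t i) else ps (t-1))))))"

end

theory Submission
  imports Defs
begin


lemma sum_perms_last:
  assumes "finite S" "S \<noteq> {}"
  shows "(\<Sum>xs\<in>permutations_of_set S. f xs) =
         (\<Sum>x\<in>S. \<Sum>ys\<in>permutations_of_set (S - {x}). f (ys @ [x]))"
proof -
  have bij: "bij_betw (\<lambda>(x,ys). ys @ [x]) (SIGMA x:S. permutations_of_set (S - {x}))
              (permutations_of_set S)"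
  proof (rule bij_betwI')
    fix a b assume "a \<in> (SIGMA x:S. permutations_of_set (S - {x}))" "b \<in> (SIGMA x:S. permutations_of_set (S - {x}))"
    then show "((case a of (x, ys) \<Rightarrow> ys @ [x]) = (case b of (x, ys) \<Rightarrow> ys @ [x])) = (a = b)"
      by (cases a; cases b) auto
  next
    fix a assume "a \<in> (SIGMA x:S. permutations_of_set (S - {x}))"
    then show "(case a of (x, ys) \<Rightarrow> ys @ [x]) \<in> permutations_of_set S"
      by (cases a) (auto simp: permutations_of_set_def)
  next
    fix xs assume xs: "xs \<in> permutations_of_set S"
    then have "xs \<noteq> []" using assms by (auto simp: permutations_of_set_def)
    then obtain ys x where e: "xs = ys @ [x]" by (metis rev_exhaust)
    with xs have "x \<in> S" "ys \<in> permutations_of_set (S - {x})"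
      by (auto simp: permutations_of_set_def)
    then show "\<exists>a\<in>(SIGMA x:S. permutations_of_set (S - {x})). xs = (case a of (x, ys) \<Rightarrow> ys @ [x])"
      using e by auto
  qed
  have "(\<Sum>x\<in>S. \<Sum>ys\<in>permutations_of_set (S - {x}). f (ys @ [x])) =
        (\<Sum>(x,ys)\<in>(SIGMA x:S. permutations_of_set (S - {x})). f (ys @ [x]))"
    using assms(1) by (subst sum.Sigma) auto
  also have "\<dots> = (\<Sum>xs\<in>permutations_of_set S. f xs)"
    using sum.reindex_bij_betw[OF bij, of f] by (simp add: case_prod_unfold)
  finally show ?thesis by simp
qed

lemma preceding_last_self: "i \<notin> set ys \<Longrightarrow> preceding (ys @ [i]) i = set ys"
  unfolding preceding_def by (subst takeWhile_append2) auto

lemma preceding_last_other: "i \<in> set ys \<Longrightarrow> preceding (ys @ [x]) i = preceding ys i"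
  unfolding preceding_def by (subst takeWhile_append1[of i]) auto

lemma i_notin_preceding: "i \<notin> preceding xs i"
proof
  assume "i \<in> preceding xs i"
  then have "i \<in> set (takeWhile (\<lambda>x. x \<noteq> i) xs)" by (simp add: preceding_def)
  then show False using set_takeWhileD by fastforce
qed

definition shv :: "(nat set \<Rightarrow> real) \<Rightarrow> nat set \<Rightarrow> nat \<Rightarrow> real" where
  "shv c S i = (\<Sum>xs\<in>permutations_of_set S. c (insert i (preceding xs i)) - c (preceding xs i))
      / real (card (permutations_of_set S))"

primrec potn :: "(nat set \<Rightarrow> real) \<Rightarrow> nat \<Rightarrow> nat set \<Rightarrow> real" where
  "potn c 0 S = 0"
| "potn c (Suc m) S = (c S + (\<Sum>j\<in>S. potn c m (S - {j}))) / real (card S)"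

definition pot :: "(nat set \<Rightarrow> real) \<Rightarrow> nat set \<Rightarrow> real" where
  "pot c S = potn c (card S) S"

lemma pot_empty[simp]: "pot c {} = 0" by (simp add: pot_def)

lemma pot_rec:
  assumes "c {} = 0" "finite S"
  shows "real (card S) * pot c S = c S + (\<Sum>j\<in>S. pot c (S - {j}))"
proof (cases "S = {}")
  case True then show ?thesis using assms by simp
next
  case False
  then obtain m where m: "card S = Suc m" using assms(2) by (cases "card S") auto
  have "(\<Sum>j\<in>S. potn c m (S - {j})) = (\<Sum>j\<in>S. pot c (S - {j}))"
    by (rule sum.cong) (use m assms(2) in \<open>auto simp: pot_def\<close>)
  then show ?thesis using m by (simp add: pot_def)
qed

lemma shv_rec:
  assumes "finite S" "i \<in> S"
  shows "real (card S) * shv c S i = (c S - c (S - {i})) + (\<Sum>x\<in>S - {i}. shv c (S - {x}) i)"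
proof -
  define g where "g T = c (insert i T) - c T" for T
  define n where "n = card S"
  have n1: "n \<ge> 1" proof -
    have "card S > 0" using assms card_gt_0_iff by blast
    then show ?thesis by (simp add: n_def)
  qed
  have "(\<Sum>xs\<in>permutations_of_set S. g (preceding xs i)) =
        (\<Sum>x\<in>S. \<Sum>ys\<in>permutations_of_set (S - {x}). g (preceding (ys @ [x]) i))"
    using assms by (intro sum_perms_last) auto
  also have "\<dots> = (\<Sum>ys\<in>permutations_of_set (S - {i}). g (preceding (ys @ [i]) i)) +
     (\<Sum>x\<in>S - {i}. \<Sum>ys\<in>permutations_of_set (S - {x}). g (preceding (ys @ [x]) i))"
    using assms by (simp add: sum.remove)
  also have "(\<Sum>ys\<in>permutations_of_set (S - {i}). g (preceding (ys @ [i]) i)) =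
             (\<Sum>ys\<in>permutations_of_set (S - {i}). g (S - {i}))"
    by (rule sum.cong) (auto simp: permutations_of_set_def preceding_last_self)
  also have "\<dots> = fact (n - 1) * g (S - {i})"
    using assms by (simp add: n_def)
  also have "(\<Sum>x\<in>S - {i}. \<Sum>ys\<in>permutations_of_set (S - {x}). g (preceding (ys @ [x]) i)) =
             (\<Sum>x\<in>S - {i}. fact (n - 1) * shv c (S - {x}) i)"
  proof (rule sum.cong)
    fix x assume x: "x \<in> S - {i}"
    have "(\<Sum>ys\<in>permutations_of_set (S - {x}). g (preceding (ys @ [x]) i)) =
          (\<Sum>ys\<in>permutations_of_set (S - {x}). g (preceding ys i))"
      by (rule sum.cong) (use x assms in \<open>auto simp: permutations_of_set_def preceding_last_other\<close>)
    moreover have "card (S - {x}) = n - 1" using x assms by (simp add: n_def)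
    ultimately show "(\<Sum>ys\<in>permutations_of_set (S - {x}). g (preceding (ys @ [x]) i)) =
             fact (n - 1) * shv c (S - {x}) i"
      using assms by (simp add: shv_def g_def)
  qed simp
  finally have eq: "(\<Sum>xs\<in>permutations_of_set S. g (preceding xs i)) =
     fact (n - 1) * g (S - {i}) + (\<Sum>x\<in>S - {i}. fact (n - 1) * shv c (S - {x}) i)" .
  define A where "A = (\<Sum>xs\<in>permutations_of_set S. g (preceding xs i))"
  define B where "B = (\<Sum>x\<in>S - {i}. shv c (S - {x}) i)"
  have sh: "shv c S i = A / fact n"
    using assms by (simp add: shv_def g_def n_def A_def)
  have fn: "(fact n :: real) = real n * fact (n - 1)"
    using n1 by (intro fact_reduce) simp
  have f0: "(fact (n - 1) :: real) > 0" by simp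
  have n0: "real n > 0" using n1 by simp
  have A: "A = fact (n - 1) * (g (S - {i}) + B)"
    unfolding A_def B_def eq by (simp add: sum_distrib_left[symmetric] distrib_left)
  have "real n * shv c S i = real n * (fact (n - 1) * (g (S - {i}) + B)) / (real n * fact (n - 1))"
    unfolding sh fn A by simp
  also have "\<dots> = g (S - {i}) + B"
    using f0 n0 by simp
  finally show ?thesis
    using assms by (simp add: n_def g_def insert_absorb B_def)
qed



lemma shv_pot:
  assumes "c {} = 0" "finite S" "i \<in> S"
  shows "shv c S i = pot c S - pot c (S - {i})"
  using assms(2,3)
proof (induction "card S" arbitrary: S rule: less_induct)
  case less
  define n where "n = card S"
  have n0: "real n > 0" using less.prems card_gt_0_iff n_def by fastforce
  have IH: "shv c (S - {x}) i = pot c (S - {x}) - pot c (S - {i} - {x})" if "x \<in> S - {i}" for x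
  proof -
    have "card (S - {x}) < card S" using that less.prems by (meson DiffD1 card_Diff1_less)
    then have "shv c (S - {x}) i = pot c (S - {x}) - pot c (S - {x} - {i})"
      using less.hyps[of "S - {x}"] that less.prems by auto
    also have "S - {x} - {i} = S - {i} - {x}" by auto
    finally show ?thesis .
  qed
  have r1: "real n * pot c S = c S + pot c (S - {i}) + (\<Sum>j\<in>S - {i}. pot c (S - {j}))"
    using pot_rec[of c S, OF assms(1) less.prems(1)] less.prems by (simp add: n_def sum.remove)
  have cn: "real (card (S - {i})) = real n - 1"
    using less.prems n0 by (simp add: n_def of_nat_diff)
  have r2: "(real n - 1) * pot c (S - {i}) = c (S - {i}) + (\<Sum>j\<in>S - {i}. pot c (S - {i} - {j}))"
    using pot_rec[of c "S - {i}", OF assms(1)] less.prems cn by simp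
  have "real n * shv c S i = (c S - c (S - {i})) + (\<Sum>x\<in>S - {i}. shv c (S - {x}) i)"
    using shv_rec[OF less.prems] by (simp add: n_def)
  also have "(\<Sum>x\<in>S - {i}. shv c (S - {x}) i) =
      (\<Sum>x\<in>S - {i}. pot c (S - {x})) - (\<Sum>x\<in>S - {i}. pot c (S - {i} - {x}))"
    using IH by (simp add: sum_subtractf)
  finally have e1: "real n * shv c S i = (c S - c (S - {i})) + ((\<Sum>x\<in>S - {i}. pot c (S - {x})) - (\<Sum>x\<in>S - {i}. pot c (S - {i} - {x})))" .
  have r2': "real n * pot c (S - {i}) - pot c (S - {i}) = c (S - {i}) + (\<Sum>j\<in>S - {i}. pot c (S - {i} - {j}))"
    using r2 by (simp add: left_diff_distrib)
  have "real n * shv c S i = real n * pot c S - real n * pot c (S - {i})"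
    using e1 r1 r2' by linarith
  then have "real n * shv c S i = real n * (pot c S - pot c (S - {i}))"
    by (simp add: right_diff_distrib)
  then show ?case using n0 by simp
qed

definition harm :: "nat \<Rightarrow> real" where
  "harm m = (\<Sum>k=1..m. 1 / real k)"

lemma harm_Suc: "harm (Suc m) = harm m + 1 / real (Suc m)"
  by (simp add: harm_def)

lemma harm_mono: "m \<le> m' \<Longrightarrow> harm m \<le> harm m'"
  unfolding harm_def by (rule sum_mono2) auto

lemma harm_nonneg: "harm m \<ge> 0"
  unfolding harm_def by (rule sum_nonneg) auto

lemma pot_upper:
  assumes "c {} = 0" "\<And>A B. A \<subseteq> B \<Longrightarrow> B \<subseteq> U \<Longrightarrow> c A \<le> c B"
    and "finite S" "S \<subseteq> U"
  shows "pot c S \<le> harm (card S) * c S"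
  using assms(3,4)
proof (induction "card S" arbitrary: S rule: less_induct)
  case less
  show ?case
  proof (cases "S = {}")
    case True then show ?thesis using assms(1) by simp
  next
    case False
    define n where "n = card S"
    have n0: "n > 0" using less.prems False unfolding n_def by (simp add: card_gt_0_iff)
    then obtain m where m: "n = Suc m" using not0_implies_Suc by blast
    have c0: "c S \<ge> 0" using assms(1) assms(2)[of "{}" S] less.prems by simp
    have "\<And>j. j \<in> S \<Longrightarrow> pot c (S - {j}) \<le> harm m * c S"
    proof -
      fix j assume j: "j \<in> S"
      have cd: "card (S - {j}) = m" using j less.prems m n_def by simp
      have lt: "card (S - {j}) < card S" using cd m n_def by simp
      have sub: "S - {j} \<subseteq> U" using less.prems by auto
      have "pot c (S - {j}) \<le> harm (card (S - {j})) * c (S - {j})"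
        using less.prems(1) by (intro less.hyps[OF lt _ sub]) simp
      then have "pot c (S - {j}) \<le> harm m * c (S - {j})" using cd by simp
      also have "\<dots> \<le> harm m * c S"
        using assms(2)[of "S - {j}" S] less.prems harm_nonneg by (intro mult_left_mono) auto
      finally show "pot c (S - {j}) \<le> harm m * c S" .
    qed
    then have "(\<Sum>j\<in>S. pot c (S - {j})) \<le> (\<Sum>j\<in>S. harm m * c S)" by (rule sum_mono)
    also have "\<dots> = real n * harm m * c S" by (simp add: n_def)
    finally have "real n * pot c S \<le> c S + real n * harm m * c S"
      using pot_rec[of c S, OF assms(1) less.prems(1)] by (simp add: n_def)
    also have "\<dots> = real n * (harm n * c S)"
    proof -
      have "harm n = harm m + 1 / real n" using m harm_Suc by simp
      then have "real n * harm n = real n * harm m + 1" using n0 by (simp add: distrib_left)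
      then have "real n * (harm n * c S) = (real n * harm m + 1) * c S" by (simp only: mult.assoc[symmetric])
      then show ?thesis by (simp add: distrib_right mult.assoc)
    qed
    finally show ?thesis using n0 by (simp add: n_def)
  qed
qed

lemma pot_lower:
  assumes "c {} = 0" "d > 0"
    and key: "\<And>A. A \<subseteq> U \<Longrightarrow> finite A \<Longrightarrow> (real (card A) - d) * c A \<le> (\<Sum>j\<in>A. c (A - {j}))"
    and "finite S" "S \<subseteq> U"
  shows "c S \<le> d * pot c S"
  using assms(4,5)
proof (induction "card S" arbitrary: S rule: less_induct)
  case less
  show ?case
  proof (cases "S = {}")
    case True then show ?thesis using assms(1) by simp
  next
    case False
    define n where "n = card S"
    have n0: "n > 0" using less.prems False unfolding n_def by (simp add: card_gt_0_iff)
    have "\<And>j. j \<in> S \<Longrightarrow> c (S - {j}) \<le> d * pot c (S - {j})"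
    proof -
      fix j assume j: "j \<in> S"
      have lt: "card (S - {j}) < card S" using j less.prems(1) by (metis card_Diff1_less)
      have sub: "S - {j} \<subseteq> U" using less.prems by auto
      show "c (S - {j}) \<le> d * pot c (S - {j})"
        using less.prems(1) by (intro less.hyps[OF lt _ sub]) simp
    qed
    then have "(\<Sum>j\<in>S. c (S - {j})) \<le> (\<Sum>j\<in>S. d * pot c (S - {j}))" by (rule sum_mono)
    then have "(real n - d) * c S \<le> d * (\<Sum>j\<in>S. pot c (S - {j}))"
      using key[OF less.prems(2,1)] by (simp add: n_def sum_distrib_left)
    then have "real n * c S \<le> d * (real n * pot c S)"
      using pot_rec[of c S, OF assms(1) less.prems(1)] by (simp add: n_def algebra_simps)
    then have "real n * c S \<le> real n * (d * pot c S)" by (simp add: algebra_simps)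
    then show ?thesis using n0 by simp
  qed
qed



lemma bern:
  fixes a b \<alpha> :: real
  assumes "0 < a" "a \<le> b" "1 \<le> \<alpha>"
  shows "b powr \<alpha> - a powr \<alpha> \<le> (b - a) * (\<alpha> * b powr (\<alpha> - 1))"
proof (cases "a = b")
  case True then show ?thesis by simp
next
  case False
  then have ab: "a < b" using assms by simp
  have "\<exists>z. a < z \<and> z < b \<and> b powr \<alpha> - a powr \<alpha> = (b - a) * (\<alpha> * z powr (\<alpha> - 1))"
    by (rule MVT2[OF ab]) (use assms in \<open>auto intro: has_real_derivative_powr\<close>)
  then obtain z where z: "a < z" "z < b" "b powr \<alpha> - a powr \<alpha> = (b - a) * (\<alpha> * z powr (\<alpha> - 1))"
    by blast
  have "z powr (\<alpha> - 1) \<le> b powr (\<alpha> - 1)"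
    using z assms by (intro powr_mono2) auto
  then have m: "\<alpha> * z powr (\<alpha> - 1) \<le> \<alpha> * b powr (\<alpha> - 1)"
    using assms by (intro mult_left_mono) auto
  have "(b - a) * (\<alpha> * z powr (\<alpha> - 1)) \<le> (b - a) * (\<alpha> * b powr (\<alpha> - 1))"
    using mult_left_mono[OF m, of "b - a"] ab by simp
  then show ?thesis using z(3) by simp
qed

lemma powr_sum_lower:
  fixes x :: "nat \<Rightarrow> real" and \<alpha> W :: real
  assumes "finite A" "W = (\<Sum>j\<in>A. x j)" "\<And>j. j \<in> A \<Longrightarrow> x j \<ge> 0"
    "\<And>j. j \<in> A \<Longrightarrow> W - x j > 0" "1 \<le> \<alpha>"
  shows "(real (card A) - \<alpha>) * W powr \<alpha> \<le> (\<Sum>j\<in>A. (W - x j) powr \<alpha>)"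
proof (cases "A = {}")
  case True then show ?thesis using assms(5) by simp
next
  case False
  then obtain j0 where "j0 \<in> A" by blast
  then have W0: "W > 0" using assms(3,4)[of j0] by linarith
  have "\<And>j. j \<in> A \<Longrightarrow> W powr \<alpha> - (W - x j) powr \<alpha> \<le> x j * (\<alpha> * W powr (\<alpha> - 1))"
  proof -
    fix j assume j: "j \<in> A"
    have "W powr \<alpha> - (W - x j) powr \<alpha> \<le> (W - (W - x j)) * (\<alpha> * W powr (\<alpha> - 1))"
      using assms(3,4)[OF j] assms(5) by (intro bern) auto
    then show "W powr \<alpha> - (W - x j) powr \<alpha> \<le> x j * (\<alpha> * W powr (\<alpha> - 1))" by simp
  qed
  then have "(\<Sum>j\<in>A. W powr \<alpha> - (W - x j) powr \<alpha>) \<le> (\<Sum>j\<in>A. x j * (\<alpha> * W powr (\<alpha> - 1)))"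
    by (rule sum_mono)
  also have "\<dots> = W * (\<alpha> * W powr (\<alpha> - 1))"
    using assms(2) by (simp add: sum_distrib_right)
  also have "\<dots> = \<alpha> * W powr \<alpha>"
  proof -
    have "W * W powr (\<alpha> - 1) = W powr \<alpha>"
      using W0 by (simp add: powr_diff)
    then show ?thesis by (simp add: algebra_simps)
  qed
  finally have "real (card A) * W powr \<alpha> - (\<Sum>j\<in>A. (W - x j) powr \<alpha>) \<le> \<alpha> * W powr \<alpha>"
    by (simp add: sum_subtractf)
  then show ?thesis by (simp add: left_diff_distrib)
qed

lemma F_nonneg:
  assumes "GND_instance E N P w q \<alpha> \<sigma> \<xi>" "e \<in> E"
  shows "Fcost q \<alpha> \<sigma> \<xi> e l \<ge> 0"
  using assms unfolding GND_instance_def Fcost_def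
  by (auto intro!: add_nonneg_nonneg sum_nonneg mult_nonneg_nonneg)

lemma F_mono:
  assumes "GND_instance E N P w q \<alpha> \<sigma> \<xi>" "e \<in> E" "0 \<le> l" "l \<le> l'"
  shows "Fcost q \<alpha> \<sigma> \<xi> e l \<le> Fcost q \<alpha> \<sigma> \<xi> e l'"
proof (cases "l = 0")
  case True then show ?thesis using F_nonneg[OF assms(1,2)] by (simp add: Fcost_def)
next
  case False
  then have l': "l' \<noteq> 0" using assms by auto
  have "(\<Sum>j\<in>{1..q}. \<xi> e j * l powr \<alpha> j) \<le> (\<Sum>j\<in>{1..q}. \<xi> e j * l' powr \<alpha> j)"
  proof (rule sum_mono)
    fix j assume j: "j \<in> {1..q}"
    have "\<xi> e j \<ge> 0" "\<alpha> j > 1" using assms(1,2) j unfolding GND_instance_def by auto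
    then show "\<xi> e j * l powr \<alpha> j \<le> \<xi> e j * l' powr \<alpha> j"
      using assms(3,4) by (intro mult_left_mono powr_mono2) auto
  qed
  then show ?thesis using False l' by (simp add: Fcost_def)
qed

lemma key_F:
  assumes inst: "GND_instance E N P w q \<alpha> \<sigma> \<xi>" and e: "e \<in> E"
    and A: "A \<subseteq> {..<N}" "finite A"
    and d: "\<And>j. j \<in> {1..q} \<Longrightarrow> \<alpha> j \<le> d" "1 \<le> d"
  shows "(real (card A) - d) * Fcost q \<alpha> \<sigma> \<xi> e (real (\<Sum>i\<in>A. w i e))
       \<le> (\<Sum>j\<in>A. Fcost q \<alpha> \<sigma> \<xi> e (real (\<Sum>i\<in>A - {j}. w i e)))"
proof -
  define F where "F = Fcost q \<alpha> \<sigma> \<xi>"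
  have F0: "F e 0 = 0" by (simp add: F_def Fcost_def)
  have wpos: "\<And>i. i \<in> A \<Longrightarrow> w i e \<ge> 1" using inst A e unfolding GND_instance_def by auto
  show ?thesis
  proof (cases "card A \<le> 1")
    case True
    then have "card A = 0 \<or> card A = 1" by linarith
    then consider "A = {}" | a where "A = {a}"
    proof
      assume "card A = 0" then have "A = {}" using A(2) by simp
      then show thesis using that(1) by simp
    next
      assume "card A = 1" then obtain a where "A = {a}" by (rule card_1_singletonE)
      then show thesis using that(2) by simp
    qed
    then show ?thesis
    proof cases
      case 1 then show ?thesis by (simp add: Fcost_def)
    next
      case 2
      have "(1 - d) * F e (real (w a e)) \<le> 0"
        using d(2) F_nonneg[OF inst e] unfolding F_def by (simp add: mult_nonpos_nonneg)
      then show ?thesis using 2 F0 by (simp add: F_def)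
    qed
  next
    case False
    define W where "W = (\<Sum>j\<in>A. real (w j e))"
    define x where "x j = real (w j e)" for j
    have Wx: "real (\<Sum>i\<in>A - {j}. w i e) = W - x j" if "j \<in> A" for j
      using that A(2) by (simp add: W_def x_def of_nat_sum sum_diff1)
    have Wj1: "W - x j \<ge> 1" if j: "j \<in> A" for j
    proof -
      have "card (A - {j}) \<ge> 1" using False j A(2) by simp
      then have "A - {j} \<noteq> {}" by (intro notI) simp
      then obtain k where k: "k \<in> A - {j}" by blast
      have "real (w k e) \<le> (\<Sum>i\<in>A - {j}. real (w i e))"
        using k A(2) by (intro member_le_sum) auto
      moreover have "real (w k e) \<ge> 1" using wpos k by simp
      moreover have "(\<Sum>i\<in>A - {j}. real (w i e)) = W - x j"
        using Wx[OF j] by (simp add: of_nat_sum)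
      ultimately show ?thesis by linarith
    qed
    have W1: "W \<ge> 1"
    proof -
      have "A \<noteq> {}" using False by (intro notI) simp
      then obtain j where "j \<in> A" by blast
      then show ?thesis using Wj1[of j] by (simp add: x_def)
    qed
    define n where "n = real (card A)"
    have lhs: "F e W = \<sigma> e + (\<Sum>k\<in>{1..q}. \<xi> e k * W powr \<alpha> k)"
      using W1 by (simp add: F_def Fcost_def)
    have rhs: "(\<Sum>j\<in>A. F e (W - x j)) = n * \<sigma> e + (\<Sum>k\<in>{1..q}. \<xi> e k * (\<Sum>j\<in>A. (W - x j) powr \<alpha> k))"
    proof -
      have "(\<Sum>j\<in>A. F e (W - x j)) = (\<Sum>j\<in>A. \<sigma> e + (\<Sum>k\<in>{1..q}. \<xi> e k * (W - x j) powr \<alpha> k))"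
      proof (rule sum.cong)
        fix j assume "j \<in> A"
        then have "W - x j \<noteq> 0" using Wj1[of j] by linarith
        then show "F e (W - x j) = \<sigma> e + (\<Sum>k\<in>{1..q}. \<xi> e k * (W - x j) powr \<alpha> k)"
          by (simp add: F_def Fcost_def)
      qed simp
      also have "\<dots> = n * \<sigma> e + (\<Sum>j\<in>A. \<Sum>k\<in>{1..q}. \<xi> e k * (W - x j) powr \<alpha> k)"
        by (simp add: sum.distrib n_def)
      also have "(\<Sum>j\<in>A. \<Sum>k\<in>{1..q}. \<xi> e k * (W - x j) powr \<alpha> k) =
                 (\<Sum>k\<in>{1..q}. \<xi> e k * (\<Sum>j\<in>A. (W - x j) powr \<alpha> k))"
        by (subst sum.swap) (simp add: sum_distrib_left)
      finally show ?thesis .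
    qed
    have s0: "\<sigma> e \<ge> 0" using inst e unfolding GND_instance_def by auto
    have t1: "(n - d) * \<sigma> e \<le> n * \<sigma> e" using s0 d(2) by (simp add: mult_right_mono)
    have t2: "(\<Sum>k\<in>{1..q}. (n - d) * (\<xi> e k * W powr \<alpha> k)) \<le>
              (\<Sum>k\<in>{1..q}. \<xi> e k * (\<Sum>j\<in>A. (W - x j) powr \<alpha> k))"
    proof (rule sum_mono)
      fix k assume k: "k \<in> {1..q}"
      have xk: "\<xi> e k \<ge> 0" "\<alpha> k > 1" using inst e k unfolding GND_instance_def by auto
      have "(n - \<alpha> k) * W powr \<alpha> k \<le> (\<Sum>j\<in>A. (W - x j) powr \<alpha> k)"
        unfolding n_def
      proof (rule powr_sum_lower[OF A(2)])
        show "W = (\<Sum>j\<in>A. x j)" by (simp add: W_def x_def)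
        show "\<And>j. j \<in> A \<Longrightarrow> 0 \<le> x j" by (simp add: x_def)
        show "\<And>j. j \<in> A \<Longrightarrow> W - x j > 0" using Wj1 by fastforce
        show "1 \<le> \<alpha> k" using xk by simp
      qed
      moreover have "(n - d) * W powr \<alpha> k \<le> (n - \<alpha> k) * W powr \<alpha> k"
        using d(1)[OF k] by (intro mult_right_mono) auto
      ultimately have "(n - d) * W powr \<alpha> k \<le> (\<Sum>j\<in>A. (W - x j) powr \<alpha> k)" by linarith
      then have "\<xi> e k * ((n - d) * W powr \<alpha> k) \<le> \<xi> e k * (\<Sum>j\<in>A. (W - x j) powr \<alpha> k)"
        using xk by (intro mult_left_mono) auto
      then show "(n - d) * (\<xi> e k * W powr \<alpha> k) \<le> \<xi> e k * (\<Sum>j\<in>A. (W - x j) powr \<alpha> k)"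
        by (simp add: algebra_simps)
    qed
    have "(n - d) * F e W = (n - d) * \<sigma> e + (\<Sum>k\<in>{1..q}. (n - d) * (\<xi> e k * W powr \<alpha> k))"
      unfolding lhs by (simp add: distrib_left sum_distrib_left)
    also have "\<dots> \<le> (\<Sum>j\<in>A. F e (W - x j))" unfolding rhs using t1 t2 by linarith
    also have "\<dots> = (\<Sum>j\<in>A. F e (real (\<Sum>i\<in>A - {j}. w i e)))"
    proof (rule sum.cong)
      fix j assume j: "j \<in> A"
      show "F e (W - x j) = F e (real (\<Sum>i\<in>A - {j}. w i e))" using Wx[OF j] by (simp only:)
    qed simp
    finally show ?thesis by (simp add: F_def n_def W_def of_nat_sum)
  qed
qed



lemma share_pot:
  assumes "F e 0 = 0" "i < N"
  shows "shapley_share F N w p i e =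
    (if e \<in> p i then pot (\<lambda>T. F e (real (\<Sum>i\<in>T. w i e))) (users N p e)
        - pot (\<lambda>T. F e (real (\<Sum>i\<in>T. w i e))) (users N p e - {i}) else 0)"
proof (cases "e \<in> p i")
  case False then show ?thesis by (simp add: shapley_share_def)
next
  case True
  define c where "c = (\<lambda>T. F e (real (\<Sum>i\<in>T. w i e)))"
  define U where "U = users N p e"
  have fin: "finite U" by (simp add: U_def users_def)
  have iU: "i \<in> U" using True assms by (simp add: U_def users_def)
  have "shapley_share F N w p i e = shv c U i"
    unfolding shapley_share_def shv_def using True
  proof (simp only: if_True U_def[symmetric])
    have "(\<Sum>xs\<in>permutations_of_set U.
            F e (real (\<Sum>i'\<in>preceding xs i. w i' e) + real (w i e)) - F e (real (\<Sum>i'\<in>preceding xs i. w i' e)))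
        = (\<Sum>xs\<in>permutations_of_set U. c (insert i (preceding xs i)) - c (preceding xs i))"
    proof (rule sum.cong)
      fix xs
      have "finite (preceding xs i)" by (simp add: preceding_def)
      then have h: "(\<Sum>i'\<in>insert i (preceding xs i). w i' e) = w i e + (\<Sum>i'\<in>preceding xs i. w i' e)"
        using i_notin_preceding[of i xs] by simp
      then show "F e (real (\<Sum>i'\<in>preceding xs i. w i' e) + real (w i e)) - F e (real (\<Sum>i'\<in>preceding xs i. w i' e))
          = c (insert i (preceding xs i)) - c (preceding xs i)"
        unfolding c_def h by (simp add: add.commute del: of_nat_sum)
    qed simp
    then show "(\<Sum>xs\<in>permutations_of_set U.
            F e (real (\<Sum>i'\<in>preceding xs i. w i' e) + real (w i e)) - F e (real (\<Sum>i'\<in>preceding xs i. w i' e)))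
          / real (card (permutations_of_set U)) =
        (\<Sum>xs\<in>permutations_of_set U. c (insert i (preceding xs i)) - c (preceding xs i))
          / real (card (permutations_of_set U))" by simp
  qed
  also have "\<dots> = pot c U - pot c (U - {i})"
    using shv_pot[of c U i] fin iU assms(1) by (simp add: c_def)
  finally show ?thesis using True by (simp add: c_def U_def)
qed

lemma users_upd: "users N (p(i := r)) e - {i} = users N p e - {i}"
  by (auto simp: users_def)

lemma pot_minus_share:
  assumes "F e 0 = 0" "i < N"
  shows "pot (\<lambda>T. F e (real (\<Sum>i\<in>T. w i e))) (users N p e) - shapley_share F N w p i e
       = pot (\<lambda>T. F e (real (\<Sum>i\<in>T. w i e))) (users N p e - {i})"
proof (cases "e \<in> p i")
  case True then show ?thesis using share_pot[where F=F and e=e and i=i and N=N and w=w and p=p, OF assms] by simp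
next
  case False
  then have "users N p e - {i} = users N p e" by (auto simp: users_def)
  then show ?thesis using False share_pot[where F=F and e=e and i=i and N=N and w=w and p=p, OF assms] by simp
qed



theorem theorem9p4:
  fixes E :: "'e set" and N :: nat and P :: "nat \<Rightarrow> 'e set set" and w :: "nat \<Rightarrow> 'e \<Rightarrow> nat"
    and q :: nat and \<alpha> :: "nat \<Rightarrow> real" and \<sigma> :: "'e \<Rightarrow> real" and \<xi> :: "'e \<Rightarrow> nat \<Rightarrow> real"
    and \<rho> \<epsilon> :: real and ft :: "nat \<Rightarrow> 'e \<Rightarrow> 'e profile \<Rightarrow> real" and det :: bool
    and T tstar :: nat and ps :: "nat \<Rightarrow> 'e profile" and br :: "nat \<Rightarrow> nat \<Rightarrow> 'e set"
  defines "F \<equiv> Fcost q \<alpha> \<sigma> \<xi>"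
  defines "C \<equiv> total_cost E F N w"
  defines "Ct \<equiv> (\<lambda>i p. \<Sum>e\<in>E. ft i e p)"
  assumes inst: "GND_instance E N P w q \<alpha> \<sigma> \<xi>"
    and rho: "\<rho> \<ge> 1"
    and eps: "0 < \<epsilon>" "\<epsilon> < 1"
    and ft_approx: "\<And>p i e. is_profile N P p \<Longrightarrow> i < N \<Longrightarrow> e \<in> E \<Longrightarrow>
         (1 - \<epsilon>) * shapley_share F N w p i e \<le> ft i e p \<and>
         ft i e p \<le> (1 + \<epsilon>) * shapley_share F N w p i e"
    and run: "ABRD_run_nonconv E N P F w \<rho> ((1 + \<epsilon>) / (1 - \<epsilon>)) Ct det T ps br"
    and tstar: "tstar \<le> T" "\<And>t. t \<le> T \<Longrightarrow> C (ps tstar) \<le> C (ps t)"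
  shows "C (ps T) \<le> real_of_int \<lceil>Max (\<alpha> ` {1..q})\<rceil> * (\<Sum>k=1..N. 1 / real k) * C (ps tstar)"
proof -
  define ce where "ce e T = F e (real (\<Sum>i\<in>T. w i e))" for e T
  define Phi where "Phi p = (\<Sum>e\<in>E. pot (ce e) (users N p e))" for p
  define Ci where "Ci p i = (\<Sum>e\<in>E. shapley_share F N w p i e)" for p i
  define d where "d = real_of_int \<lceil>Max (\<alpha> ` {1..q})\<rceil>"
  define \<epsilon>1 where "\<epsilon>1 = (1 + \<epsilon>) / (1 - \<epsilon>)"
  have ce_eq: "ce e = (\<lambda>T. F e (real (\<Sum>i\<in>T. w i e)))" for e
    by (rule ext) (simp only: ce_def)
  have F0: "F e 0 = 0" for e by (simp add: F_def Fcost_def)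
  have finE: "finite E" using inst by (simp add: GND_instance_def)
  have q1: "q \<ge> 1" using inst by (simp add: GND_instance_def)
  have dge: "\<alpha> j \<le> d" if "j \<in> {1..q}" for j
  proof -
    have "\<alpha> j \<le> Max (\<alpha> ` {1..q})" using that by (intro Max_ge) auto
    also have "\<dots> \<le> d" unfolding d_def by (rule le_of_int_ceiling)
    finally show ?thesis .
  qed
  have d1: "d \<ge> 1"
  proof -
    have "\<alpha> 1 > 1" using inst q1 by (simp add: GND_instance_def)
    then show ?thesis using dge[of 1] q1 by simp
  qed
  have C_eq: "C p = (\<Sum>e\<in>E. ce e (users N p e))" for p
    by (simp add: C_def total_cost_def load_def users_def ce_def)
  have users_sub: "users N p e \<subseteq> {..<N}" for p e by (auto simp: users_def)
  have users_fin: "finite (users N p e)" for p e by (simp add: users_def)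
  have low: "C p \<le> d * Phi p" for p
  proof -
    have "ce e (users N p e) \<le> d * pot (ce e) (users N p e)" if e: "e \<in> E" for e
    proof (rule pot_lower[where U = "{..<N}"])
      show "ce e {} = 0" by (simp add: ce_def F0)
      show "d > 0" using d1 by simp
      show "\<And>A. A \<subseteq> {..<N} \<Longrightarrow> finite A \<Longrightarrow> (real (card A) - d) * ce e A \<le> (\<Sum>j\<in>A. ce e (A - {j}))"
        unfolding ce_def F_def using key_F[OF inst e _ _ dge d1] by blast
    qed (auto simp: users_sub users_fin)
    then have "(\<Sum>e\<in>E. ce e (users N p e)) \<le> (\<Sum>e\<in>E. d * pot (ce e) (users N p e))"
      by (rule sum_mono)
    then show ?thesis by (simp add: C_eq Phi_def sum_distrib_left)
  qed
  have up: "Phi p \<le> (\<Sum>k=1..N. 1 / real k) * C p" for p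
  proof -
    have "pot (ce e) (users N p e) \<le> harm N * ce e (users N p e)" if e: "e \<in> E" for e
    proof -
      have mono: "ce e A \<le> ce e B" if "A \<subseteq> B" "B \<subseteq> {..<N}" for A B
      proof -
        have "finite B" using that(2) finite_subset by blast
        then have hs: "(\<Sum>i\<in>A. w i e) \<le> (\<Sum>i\<in>B. w i e)" using that(1) by (intro sum_mono2) auto
        show ?thesis unfolding ce_def F_def
        proof (rule F_mono[OF inst e])
          show "0 \<le> real (\<Sum>i\<in>A. w i e)" by (rule of_nat_0_le_iff)
          show "real (\<Sum>i\<in>A. w i e) \<le> real (\<Sum>i\<in>B. w i e)" using hs by (rule of_nat_mono)
        qed
      qed
      have "pot (ce e) (users N p e) \<le> harm (card (users N p e)) * ce e (users N p e)"
      proof (rule pot_upper[where U = "{..<N}"])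
        show "ce e {} = 0" by (simp add: ce_def F0)
        show "\<And>A B. A \<subseteq> B \<Longrightarrow> B \<subseteq> {..<N} \<Longrightarrow> ce e A \<le> ce e B" by (rule mono)
      qed (auto simp: users_sub users_fin)
      also have "\<dots> \<le> harm N * ce e (users N p e)"
      proof (rule mult_right_mono)
        have "card (users N p e) \<le> card {..<N}" by (rule card_mono) (auto simp: users_sub)
        then show "harm (card (users N p e)) \<le> harm N" by (intro harm_mono) simp
        show "0 \<le> ce e (users N p e)" unfolding ce_def F_def by (rule F_nonneg[OF inst e])
      qed
      finally show ?thesis .
    qed
    then have "Phi p \<le> (\<Sum>e\<in>E. harm N * ce e (users N p e))"
      unfolding Phi_def by (rule sum_mono)
    then show ?thesis by (simp add: C_eq harm_def sum_distrib_left)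
  qed
  have pot_id: "Phi (p(i := r)) - Ci (p(i := r)) i = Phi p - Ci p i" if "i < N" for p i r
  proof -
    have "Phi p - Ci p i = (\<Sum>e\<in>E. pot (ce e) (users N p e - {i}))" for p
      unfolding Phi_def Ci_def sum_subtractf[symmetric] ce_eq
      by (rule sum.cong[OF refl]) (rule pot_minus_share[where F = F and i = i and N = N, OF F0 that])
    then show ?thesis by (simp add: users_upd)
  qed
  have improve: "Ci (p(i := r)) i \<le> Ci p i"
    if pp: "is_profile N P p" and i: "i < N" and r: "r \<in> P i"
      and dl: "Ct i p - \<epsilon>1 * Ct i (p(i := r)) > 0" for p i r
  proof -
    have pp': "is_profile N P (p(i := r))" using pp r by (simp add: is_profile_def)
    have a: "Ct i p \<le> (1 + \<epsilon>) * Ci p i"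
      unfolding Ct_def Ci_def sum_distrib_left
      by (rule sum_mono) (use ft_approx[OF pp i] in blast)
    have b: "(1 - \<epsilon>) * Ci (p(i := r)) i \<le> Ct i (p(i := r))"
      unfolding Ct_def Ci_def sum_distrib_left
      by (rule sum_mono) (use ft_approx[OF pp' i] in blast)
    have e1: "\<epsilon>1 > 0" "\<epsilon>1 * (1 - \<epsilon>) = 1 + \<epsilon>" using eps by (auto simp: \<epsilon>1_def)
    have "\<epsilon>1 * ((1 - \<epsilon>) * Ci (p(i := r)) i) \<le> \<epsilon>1 * Ct i (p(i := r))"
      using b e1 by (intro mult_left_mono) auto
    then have "(1 + \<epsilon>) * Ci (p(i := r)) i \<le> \<epsilon>1 * Ct i (p(i := r))"
      using e1 by (simp add: mult.assoc[symmetric])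
    then have "(1 + \<epsilon>) * Ci (p(i := r)) i \<le> (1 + \<epsilon>) * Ci p i" using a dl by linarith
    then show ?thesis using eps by simp
  qed
  have brP: "br t i \<in> P i" if "t \<in> {1..T}" "i < N" for t i
    using run that unfolding ABRD_run_nonconv_def by blast
  have p0: "is_profile N P (ps 0)"
    using run unfolding ABRD_run_nonconv_def is_profile_def by blast
  have mv: "ps t = ps (t - 1) \<or> (\<exists>i<N. Ct i (ps (t - 1)) - \<epsilon>1 * Ct i ((ps (t - 1))(i := br t i)) > 0
              \<and> ps t = (ps (t - 1))(i := br t i))" if t: "t \<in> {1..T}" for t
  proof -
    have h: "(if det then
             (\<exists>j<N. Ct j (ps (t - 1)) - \<epsilon>1 * Ct j ((ps (t - 1))(j := br t j)) > 0 \<and>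
                ps t = (ps (t-1))(j := br t j))
           else
             (\<exists>i<N. ps t = (if Ct i (ps (t - 1)) - \<epsilon>1 * Ct i ((ps (t - 1))(i := br t i)) > 0
                             then (ps (t-1))(i := br t i) else ps (t-1))))"
      using run t unfolding ABRD_run_nonconv_def Let_def \<epsilon>1_def by (cases det) auto
    show ?thesis
    proof (cases det)
      case True
      then have "\<exists>j<N. Ct j (ps (t - 1)) - \<epsilon>1 * Ct j ((ps (t - 1))(j := br t j)) > 0 \<and>
                ps t = (ps (t-1))(j := br t j)" using h by simp
      then show ?thesis by blast
    next
      case False
      then obtain i where i: "i < N" and eq: "ps t = (if Ct i (ps (t - 1)) - \<epsilon>1 * Ct i ((ps (t - 1))(i := br t i)) > 0
                             then (ps (t-1))(i := br t i) else ps (t-1))" using h by auto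
      show ?thesis
      proof (cases "Ct i (ps (t - 1)) - \<epsilon>1 * Ct i ((ps (t - 1))(i := br t i)) > 0")
        case True then show ?thesis using i eq by auto
      next
        case False then show ?thesis using eq by simp
      qed
    qed
  qed
  have prof: "is_profile N P (ps t)" if "t \<le> T" for t
    using that
  proof (induction t)
    case 0 then show ?case using p0 by simp
  next
    case (Suc t)
    have t1: "Suc t \<in> {1..T}" using Suc.prems by simp
    have pt: "is_profile N P (ps t)" using Suc by simp
    from mv[OF t1] show ?case
    proof
      assume "ps (Suc t) = ps (Suc t - 1)" then show ?thesis using pt by simp
    next
      assume "\<exists>i<N. Ct i (ps (Suc t - 1)) - \<epsilon>1 * Ct i ((ps (Suc t - 1))(i := br (Suc t) i)) > 0
              \<and> ps (Suc t) = (ps (Suc t - 1))(i := br (Suc t) i)"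
      then obtain i where "i < N" "ps (Suc t) = (ps t)(i := br (Suc t) i)" by auto
      then show ?thesis using pt brP[OF t1] by (simp add: is_profile_def)
    qed
  qed
  have dec: "Phi (ps t) \<le> Phi (ps (t - 1))" if t1: "t \<in> {1..T}" for t
  proof -
    have pt: "is_profile N P (ps (t - 1))" using t1 by (intro prof) auto
    from mv[OF t1] show ?thesis
    proof
      assume "ps t = ps (t - 1)" then show ?thesis by simp
    next
      assume "\<exists>i<N. Ct i (ps (t - 1)) - \<epsilon>1 * Ct i ((ps (t - 1))(i := br t i)) > 0
              \<and> ps t = (ps (t - 1))(i := br t i)"
      then obtain i where i: "i < N" "Ct i (ps (t - 1)) - \<epsilon>1 * Ct i ((ps (t - 1))(i := br t i)) > 0"
        and eq: "ps t = (ps (t - 1))(i := br t i)" by auto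
      have "Ci (ps t) i \<le> Ci (ps (t - 1)) i"
        unfolding eq by (rule improve[OF pt i(1) brP[OF t1 i(1)] i(2)])
      moreover have "Phi (ps t) - Ci (ps t) i = Phi (ps (t - 1)) - Ci (ps (t - 1)) i"
        unfolding eq by (rule pot_id[OF i(1)])
      ultimately show ?thesis by linarith
    qed
  qed
  have chain: "Phi (ps (tstar + k)) \<le> Phi (ps tstar)" if "tstar + k \<le> T" for k
    using that
  proof (induction k)
    case 0 then show ?case by simp
  next
    case (Suc k)
    have "Phi (ps (tstar + Suc k)) \<le> Phi (ps (tstar + Suc k - 1))"
      using Suc.prems by (intro dec) simp
    also have "\<dots> \<le> Phi (ps tstar)" using Suc by simp
    finally show ?case .
  qed
  have "Phi (ps T) \<le> Phi (ps tstar)" using chain[of "T - tstar"] tstar(1) by simp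
  have "C (ps T) \<le> d * Phi (ps T)" by (rule low)
  also have "\<dots> \<le> d * Phi (ps tstar)"
    using \<open>Phi (ps T) \<le> Phi (ps tstar)\<close> d1 by (intro mult_left_mono) auto
  also have "\<dots> \<le> d * ((\<Sum>k=1..N. 1 / real k) * C (ps tstar))"
    using up[of "ps tstar"] d1 by (intro mult_left_mono) auto
  finally show ?thesis by (simp add: d_def mult.assoc)
qed

end
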